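(* Let $\Omega\subseteq\mathbb{R}^n$ be closed and convex, $f:\mathbb{R}^n\to\mathbb{R}$ continuously differentiable, and $h:\mathbb{R}^n\to(-\infty,+\infty]$ proper, lower semicontinuous and convex with $\mathrm{dom}\,h$ closed, bounded and contained in $\Omega$; let $\phi = f+h$. Let $A_{k-1}>0$, $a_{k-1}=\frac{1+\sqrt{1+4A_{k-1}}}{2}$, $A_k=A_{k-1}+a_{k-1}$. Let $y_{k-1}\in\mathrm{dom}\,h$, $x_{k-1}\in\Omega$, $\tilde x_k = \frac{A_{k-1}}{A_k}y_{k-1}+\frac{a_{k-1}}{A_k}x_{k-1}$, $\lambda_k>0$, $\tau_k\ge0$ and $\gamma\in(0,1)$. Let $$y_k=\operatorname{argmin}_{u\in\mathbb{R}^n}\left\{\ell_f(u;\tilde x_k)+h(u)+\frac{1+\tau_k}{2\lambda_k}\|u-\tilde x_k\|^2\right\},$$ with $\ell_f(u;\tilde x_k) := f(\tilde x_k)+\langle\nabla f(\tilde x_k),u-\tilde x_k\rangle$, and assume that either $y_k=\tilde x_k$, or $U_k\lambda_k\le\gamma$ where $U_k := \frac{2[f(y_k)-\ell_f(y_k;\tilde x_k)]}{\|y_k-\tilde x_k\|^2}$. Define $$\tilde\gamma_k(u):=\ell_f(u;\tilde x_k)+h(u)+\frac{\tau_k}{2\lambda_k}\|u-\tilde x_k\|^2,\qquad \gamma_k(u):=\tilde\gamma_k(y_k)+\frac{1}{\lambda_k}\langle\tilde x_k-y_k,u-y_k\rangle+\frac{\tau_k}{2\lambda_k}\|u-y_k\|^2,$$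 and let $x_k$ be the unique minimizer over $u\in\Omega$ of $a_{k-1}\gamma_k(u)+\frac{1}{2\lambda_k}\|u-x_{k-1}\|^2$. Then for every $u\in\Omega$, $$\lambda_kA_k\phi(y_k)+\frac{\tau_ka_{k-1}+1}{2}\|u-x_k\|^2+\frac{(1-\gamma)A_k}{2}\|y_k-\tilde x_k\|^2 \le \lambda_kA_{k-1}\gamma_k(y_{k-1})+\lambda_ka_{k-1}\gamma_k(u)+\frac12\|u-x_{k-1}\|^2 .$$
   Context: $\|\cdot\|$ and $\langle\cdot,\cdot\rangle$ are the Euclidean norm and inner product on $\mathbb{R}^n$; $\mathrm{dom}\,h=\{u:h(u)<+\infty\}$. *)

theory Defs
  imports "HOL-Analysis.Analysis"
begin

definition edom :: "('a \<Rightarrow> ereal) \<Rightarrow> 'a set" where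
  "edom h = {u. h u < \<infinity>}"

definition proper_fun :: "('a \<Rightarrow> ereal) \<Rightarrow> bool" where
  "proper_fun h \<longleftrightarrow> (\<forall>u. h u \<noteq> -\<infinity>) \<and> edom h \<noteq> {}"

definition lsc_fun :: "('a::topological_space \<Rightarrow> ereal) \<Rightarrow> bool" where
  "lsc_fun h \<longleftrightarrow> (\<forall>c::ereal. closed {u. h u \<le> c})"

definition convex_efun :: "('a::real_vector \<Rightarrow> ereal) \<Rightarrow> bool" where
  "convex_efun h \<longleftrightarrow> convex (edom h) \<and> convex_on (edom h) (\<lambda>u. real_of_ereal (h u))"

definition lin_f :: "('a::real_inner \<Rightarrow> real) \<Rightarrow> ('a \<Rightarrow> 'a) \<Rightarrow> 'a \<Rightarrow> 'a \<Rightarrow> real" where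
  "lin_f f g x u = f x + inner (g x) (u - x)"

end

theory Submission
  imports Defs
begin

lemma norm_add_scale_sq:
  fixes a d :: "'a::real_inner"
  shows "(norm (a + t *\<^sub>R d))\<^sup>2 = (norm a)\<^sup>2 + 2 * t * inner a d + t\<^sup>2 * (norm d)\<^sup>2"
  unfolding power2_norm_eq_inner by (simp add: inner_add inner_commute algebra_simps power2_eq_square)

lemma lin_nonneg:
  fixes L K :: real
  assumes K: "K \<ge> 0" and H: "\<And>t. 0 < t \<Longrightarrow> t \<le> 1 \<Longrightarrow> t * L + t\<^sup>2 * K \<ge> 0"
  shows "L \<ge> 0"
proof (rule ccontr)
  assume "\<not> L \<ge> 0" hence L: "L < 0" by simp
  define t where "t = min 1 (-L/(K+1))"
  have "L / (K+1) < 0" using L K by (simp add: divide_neg_pos)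
  hence t0: "t > 0" by (simp add: t_def)
  have t1: "t \<le> 1" by (simp add: t_def)
  have "t \<le> -L/(K+1)" by (simp add: t_def)
  hence "t * K \<le> (-L/(K+1)) * K" using K by (rule mult_right_mono)
  also have "\<dots> < -L" using L K by (simp add: field_simps)
  finally have "L + t * K < 0" by simp
  hence "t * (L + t * K) < 0" using t0 by (simp add: mult_pos_neg)
  moreover have "t * (L + t*K) = t * L + t\<^sup>2 * K" by (simp add: algebra_simps power2_eq_square)
  ultimately show False using H[OF t0 t1] by simp
qed

theorem lemma4p7:
  fixes \<Omega> :: "(real^'n) set"
    and f :: "real^'n \<Rightarrow> real" and gradf :: "real^'n \<Rightarrow> real^'n"
    and h :: "real^'n \<Rightarrow> ereal"
    and A0 a0 A1 lam tau gam :: real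
    and y0 x0 xt y1 x1 :: "real^'n"
  assumes \<Omega>: "closed \<Omega>" "convex \<Omega>"
    and f_C1: "\<And>x. (f has_derivative (\<lambda>v. inner (gradf x) v)) (at x)" "continuous_on UNIV gradf"
    and h_proper: "proper_fun h" and h_lsc: "lsc_fun h" and h_convex: "convex_efun h"
    and dom_h: "closed (edom h)" "bounded (edom h)" "edom h \<subseteq> \<Omega>"
    and A0_pos: "A0 > 0"
    and a0_def: "a0 = (1 + sqrt (1 + 4 * A0)) / 2"
    and A1_def: "A1 = A0 + a0"
    and y0: "y0 \<in> edom h" and x0: "x0 \<in> \<Omega>"
    and xt_def: "xt = (A0 / A1) *\<^sub>R y0 + (a0 / A1) *\<^sub>R x0"
    and lam: "lam > 0" and tau: "tau \<ge> 0" and gam: "0 < gam" "gam < 1"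
    and y1_min: "\<And>u. ereal (lin_f f gradf xt y1) + h y1 + ereal ((1 + tau) / (2 * lam) * (norm (y1 - xt))\<^sup>2)
                   \<le> ereal (lin_f f gradf xt u) + h u + ereal ((1 + tau) / (2 * lam) * (norm (u - xt))\<^sup>2)"
    and descent: "y1 = xt \<or> (2 * (f y1 - lin_f f gradf xt y1) / (norm (y1 - xt))\<^sup>2) * lam \<le> gam"
    and gtil_def: "gtil = (\<lambda>u. lin_f f gradf xt u + real_of_ereal (h u) + tau / (2 * lam) * (norm (u - xt))\<^sup>2)"
    and gk_def: "gk = (\<lambda>u. gtil y1 + (1 / lam) * inner (xt - y1) (u - y1) + tau / (2 * lam) * (norm (u - y1))\<^sup>2)"
    and x1_in: "x1 \<in> \<Omega>"
    and x1_min: "\<And>u. u \<in> \<Omega> \<Longrightarrow> a0 * gk x1 + 1 / (2 * lam) * (norm (x1 - x0))\<^sup>2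
                                 \<le> a0 * gk u + 1 / (2 * lam) * (norm (u - x0))\<^sup>2"
  shows "\<forall>u\<in>\<Omega>. lam * A1 * (f y1 + real_of_ereal (h y1)) + (tau * a0 + 1) / 2 * (norm (u - x1))\<^sup>2
            + (1 - gam) * A1 / 2 * (norm (y1 - xt))\<^sup>2
          \<le> lam * A0 * gk y0 + lam * a0 * gk u + 1 / 2 * (norm (u - x0))\<^sup>2"
proof
  fix u assume u: "u \<in> \<Omega>"
  define G where "G = gtil y1"
  define w where "w = xt - y1"
  define p where "p = x1 - y1"
  define d where "d = u - x1"
  define e where "e = x1 - x0"
  define L where "L = a0/lam * inner w d + a0*tau/lam * inner p d + 1/lam * inner e d"
  define K where "K = (a0*tau+1)/(2*lam) * (norm d)\<^sup>2"
  have s: "(sqrt (1 + 4*A0))\<^sup>2 = 1 + 4*A0" using A0_pos by simp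
  have "sqrt (1 + 4*A0) \<ge> 0" using A0_pos by simp
  moreover have "a0 * 2 = 1 + sqrt (1 + 4*A0)" using a0_def by simp
  ultimately have a0pos: "a0 > 0" by linarith
  have a0sq: "a0\<^sup>2 = A1" unfolding A1_def a0_def using s by (simp add: power2_eq_square field_simps)
  have A1pos: "A1 > 0" using A1_def A0_pos a0pos by simp
  have K0: "K \<ge> 0" unfolding K_def using a0pos tau lam by simp
  have expand: "a0 * gk (x1 + t *\<^sub>R d) + 1/(2*lam) * (norm (x1 + t *\<^sub>R d - x0))\<^sup>2
      = a0 * gk x1 + 1/(2*lam) * (norm (x1 - x0))\<^sup>2 + t * L + t\<^sup>2 * K" for t
  proof -
    have g1: "gk (x1 + t *\<^sub>R d) = G + (1/lam) * (inner w p + t * inner w d)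
         + tau/(2*lam) * ((norm p)\<^sup>2 + 2 * t * inner p d + t\<^sup>2 * (norm d)\<^sup>2)"
    proof -
      have pe: "x1 + t *\<^sub>R d - y1 = p + t *\<^sub>R d" unfolding p_def by simp
      have "gk (x1 + t *\<^sub>R d) = G + (1/lam) * inner w (p + t *\<^sub>R d) + tau/(2*lam) * (norm (p + t *\<^sub>R d))\<^sup>2"
        unfolding gk_def G_def w_def pe by simp
      thus ?thesis unfolding norm_add_scale_sq inner_add_right by simp
    qed
    have g2: "gk x1 = G + (1/lam) * inner w p + tau/(2*lam) * (norm p)\<^sup>2"
      unfolding gk_def G_def w_def p_def by simp
    have n1: "(norm (x1 + t *\<^sub>R d - x0))\<^sup>2 = (norm e)\<^sup>2 + 2 * t * inner e d + t\<^sup>2 * (norm d)\<^sup>2"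
      using norm_add_scale_sq[of "x1 - x0" t d] unfolding e_def by (simp add: algebra_simps)
    show ?thesis unfolding g1 g2 n1 L_def K_def e_def[symmetric]
      using lam by (simp add: field_simps)
  qed
  have Lnn: "L \<ge> 0"
  proof (rule lin_nonneg[OF K0])
    fix t :: real assume t: "0 < t" "t \<le> 1"
    have "x1 + t *\<^sub>R d = (1 - t) *\<^sub>R x1 + t *\<^sub>R u" unfolding d_def by (simp add: algebra_simps)
    also have "\<dots> \<in> \<Omega>" using \<Omega>(2) x1_in u t by (simp add: convexD)
    finally have "x1 + t *\<^sub>R d \<in> \<Omega>" .
    from x1_min[OF this] show "t * L + t\<^sup>2 * K \<ge> 0" unfolding expand by simp
  qed
  have Qu: "a0 * gk u + 1/(2*lam) * (norm (u - x0))\<^sup>2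
      \<ge> a0 * gk x1 + 1/(2*lam) * (norm (x1 - x0))\<^sup>2 + K"
    using expand[of 1] Lnn unfolding d_def by simp
  have Qu': "lam * a0 * gk u + 1/2 * (norm (u - x0))\<^sup>2
      \<ge> lam * a0 * gk x1 + 1/2 * (norm (x1 - x0))\<^sup>2 + (tau * a0 + 1) / 2 * (norm (u - x1))\<^sup>2"
  proof -
    have "lam * (a0 * gk u + 1/(2*lam) * (norm (u - x0))\<^sup>2)
        \<ge> lam * (a0 * gk x1 + 1/(2*lam) * (norm (x1 - x0))\<^sup>2 + K)"
      using Qu lam by (simp add: mult_left_mono)
    moreover have e1: "lam * (a0*g + 1/(2*lam)*X) = lam*a0*g + 1/2*X" for g X
      using lam by (simp add: field_simps)
    moreover have e2: "lam * (a0*g + 1/(2*lam)*X + K) = lam*a0*g + 1/2*X + (tau * a0 + 1) / 2 * (norm (u - x1))\<^sup>2" for g X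
      using lam unfolding K_def d_def by (simp add: field_simps)
    ultimately show ?thesis by simp
  qed
  have gy0: "gk y0 \<ge> G + (1/lam) * inner w (y0 - y1)"
    unfolding gk_def G_def w_def using tau lam by simp
  have gx1: "gk x1 \<ge> G + (1/lam) * inner w (x1 - y1)"
    unfolding gk_def G_def w_def using tau lam by simp
  have xtA: "A1 *\<^sub>R xt = A0 *\<^sub>R y0 + a0 *\<^sub>R x0"
    unfolding xt_def using A1pos by (simp add: scaleR_add_right)
  have vec: "A0 *\<^sub>R (y0 - y1) + a0 *\<^sub>R (x1 - y1) = A1 *\<^sub>R w + a0 *\<^sub>R e"
  proof -
    have "A0 *\<^sub>R (y0 - y1) + a0 *\<^sub>R (x1 - y1) = A0 *\<^sub>R y0 + a0 *\<^sub>R x0 + a0 *\<^sub>R (x1 - x0) - A1 *\<^sub>R y1"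
      unfolding A1_def by (simp add: algebra_simps)
    also have "\<dots> = A1 *\<^sub>R w + a0 *\<^sub>R e" unfolding xtA[symmetric] w_def e_def
      by (simp add: algebra_simps)
    finally show ?thesis .
  qed
  have inn: "A0 * inner w (y0 - y1) + a0 * inner w (x1 - y1) = A1 * (norm w)\<^sup>2 + a0 * inner w e"
  proof -
    have "A0 * inner w (y0 - y1) + a0 * inner w (x1 - y1) = inner w (A0 *\<^sub>R (y0 - y1) + a0 *\<^sub>R (x1 - y1))"
      by (simp add: inner_add_right)
    also have "\<dots> = A1 * (norm w)\<^sup>2 + a0 * inner w e" unfolding vec
      by (simp add: inner_add_right power2_norm_eq_inner)
    finally show ?thesis .
  qed
  have sq: "1/2 * (norm e)\<^sup>2 + a0 * inner w e \<ge> - A1/2 * (norm w)\<^sup>2"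
  proof -
    have "0 \<le> (norm (e + a0 *\<^sub>R w))\<^sup>2" by simp
    also have "\<dots> = (norm e)\<^sup>2 + 2 * a0 * inner e w + a0\<^sup>2 * (norm w)\<^sup>2"
      by (rule norm_add_scale_sq)
    finally show ?thesis unfolding a0sq by (simp add: inner_commute)
  qed
  have RHS: "lam * A0 * gk y0 + lam * a0 * gk x1 + 1/2 * (norm (x1 - x0))\<^sup>2
      \<ge> lam * A1 * G + A1/2 * (norm w)\<^sup>2"
  proof -
    have "lam * A0 * gk y0 \<ge> lam * A0 * (G + (1/lam) * inner w (y0 - y1))"
      using gy0 lam A0_pos by (simp add: mult_left_mono)
    moreover have "lam * a0 * gk x1 \<ge> lam * a0 * (G + (1/lam) * inner w (x1 - y1))"
      using gx1 lam a0pos by (simp add: mult_left_mono)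
    moreover have "lam * A0 * (G + (1/lam) * inner w (y0 - y1)) + lam * a0 * (G + (1/lam) * inner w (x1 - y1))
        = lam * A1 * G + A1 * (norm w)\<^sup>2 + a0 * inner w e"
    proof -
      have "lam * A0 * (G + (1/lam) * inner w (y0 - y1)) + lam * a0 * (G + (1/lam) * inner w (x1 - y1))
         = lam * A1 * G + (A0 * inner w (y0 - y1) + a0 * inner w (x1 - y1))"
        using lam unfolding A1_def by (simp add: field_simps)
      thus ?thesis unfolding inn by simp
    qed
    ultimately show ?thesis using sq unfolding e_def by linarith
  qed
  define n where "n = norm (y1 - xt)"
  have nw: "norm w = n" unfolding w_def n_def by (simp add: norm_minus_commute)
  have Gge: "G \<ge> lin_f f gradf xt y1 + real_of_ereal (h y1)"
    unfolding G_def gtil_def using tau lam by simp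
  have desc: "2 * lam * (f y1 - lin_f f gradf xt y1) \<le> gam * n\<^sup>2"
  proof (cases "y1 = xt")
    case True thus ?thesis unfolding n_def by (simp add: lin_f_def)
  next
    case False
    hence "n\<^sup>2 > 0" unfolding n_def by simp
    moreover have "(2 * (f y1 - lin_f f gradf xt y1) / n\<^sup>2) * lam \<le> gam"
      using descent False unfolding n_def by simp
    ultimately show ?thesis by (simp add: field_simps)
  qed
  have key: "lam * A1 * (f y1 + real_of_ereal (h y1)) + (1 - gam) * A1 / 2 * n\<^sup>2
      \<le> lam * A1 * G + A1/2 * n\<^sup>2"
  proof -
    have "lam * (f y1 + real_of_ereal (h y1)) + (1 - gam) / 2 * n\<^sup>2 \<le> lam * G + 1/2 * n\<^sup>2"
    proof -
      have a: "lam * (lin_f f gradf xt y1 + real_of_ereal (h y1)) \<le> lam * G"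
        using Gge lam by (simp add: mult_left_mono)
      have b: "lam * (f y1 + real_of_ereal (h y1)) = lam * (lin_f f gradf xt y1 + real_of_ereal (h y1))
              + lam * (f y1 - lin_f f gradf xt y1)" by (simp add: algebra_simps)
      have c: "lam * (f y1 - lin_f f gradf xt y1) \<le> gam * n\<^sup>2 / 2" using desc by simp
      have d: "(1 - gam) / 2 * n\<^sup>2 = n\<^sup>2/2 - gam * n\<^sup>2 / 2" by (simp add: field_simps)
      show ?thesis using a b c d by linarith
    qed
    hence "A1 * (lam * (f y1 + real_of_ereal (h y1)) + (1 - gam) / 2 * n\<^sup>2) \<le> A1 * (lam * G + 1/2 * n\<^sup>2)"
      using A1pos by (simp add: mult_left_mono)
    thus ?thesis by (simp add: algebra_simps)
  qed
  show "lam * A1 * (f y1 + real_of_ereal (h y1)) + (tau * a0 + 1) / 2 * (norm (u - x1))\<^sup>2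
            + (1 - gam) * A1 / 2 * (norm (y1 - xt))\<^sup>2
          \<le> lam * A0 * gk y0 + lam * a0 * gk u + 1 / 2 * (norm (u - x0))\<^sup>2"
    using key RHS[unfolded nw n_def] Qu' unfolding n_def by linarith
qed

end
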